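(* Let $\mathfrak u$ be either an infinite sequence with all terms in $\{0,1\}$, or a finite sequence of length $N\ge1$ with all terms in $\{0,1\}$. Then $\Upsilon(\Upsilon(\mathfrak u))=\mathfrak u$. Consequently $\Upsilon^{(6)}(\mathfrak u)=\mathfrak u$, i.e. all levels of the discrete helicoid generated by $\mathfrak u$ coincide, and its base level consists of three copies (rotated about $a_0$ by multiples of $120^\circ$) of the rhombus formed by the P-G triangle generated by $\mathfrak u$ together with the P-G triangle generated by $\Upsilon(\mathfrak u)$, these two triangles being mirror images of each other across their common edge $\Upsilon(\mathfrak u)$.
   Context: For a finite or infinite sequence $\mathfrak u=(a_0,a_1,\dots)$ of non-negative integers, the P-G triangle generated by $\mathfrak u$ consists of the numbers $d_k^{(j)}$ defined by $d_k^{(0)}=a_k$ and $d_k^{(j+1)}=|d_{k+1}^{(j)}-d_k^{(j)}|$ for $j,k\ge 0$ (for a finite sequence $(a_0,\dots,a_{N-1})$, for $0\le k\le N-1-j$). The operator $\Upsilon$ sends $\mathfrak u$ to the left edge $(d_0^{(0)},d_0^{(1)},d_0^{(2)},\dots)$ of its P-G triangle (a sequence of the same length as $\mathfrak u$); $\Upsilon^{(n)}$ denotes its $n$-th iterate. Geometrically, the P-G triangle of $\Upsilon^{(k+1)}(\mathfrak u)$ is placed rotated by $60^\circ$ clockwise about $a_0$ relative to that of $\Upsilon^{(k)}(\mathfrak u)$, sharing the edge $\Upsilon^{(k+1)}(\mathfrak u)$; the six triangles for $k=0,\dots,5$ form the base level of the helicoid, and level $n+1$ is the base level generated by $\Upsilon^{(6n)}(\mathfrak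 u)$. *)

theory Defs
  imports Main
begin

definition absdiff :: "nat \<Rightarrow> nat \<Rightarrow> nat" where
  "absdiff x y = (if x \<le> y then y - x else x - y)"

text \<open>P-G triangle: PG a j k is d_k^(j) for the sequence a = (a_0, a_1, ...).\<close>
fun PG :: "(nat \<Rightarrow> nat) \<Rightarrow> nat \<Rightarrow> nat \<Rightarrow> nat" where
  "PG a 0 k = a k"
| "PG a (Suc j) k = absdiff (PG a j (Suc k)) (PG a j k)"

definition Ups :: "(nat \<Rightarrow> nat) \<Rightarrow> (nat \<Rightarrow> nat)" where
  "Ups a = (\<lambda>j. PG a j 0)"

definition Ups_list :: "nat list \<Rightarrow> nat list" where
  "Ups_list xs = map (\<lambda>j. PG (\<lambda>k. xs ! k) j 0) [0..<length xs]"

end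

theory Submission
  imports Defs
begin

lemma PG_local:
  "(\<forall>i. k \<le> i \<and> i \<le> k + j \<longrightarrow> a i = b i) \<Longrightarrow> PG a j k = PG b j k"
proof (induction j arbitrary: k)
  case 0 then show ?case by simp
next
  case (Suc j)
  have "PG a j (Suc k) = PG b j (Suc k)" using Suc.prems by (intro Suc.IH) auto
  moreover have "PG a j k = PG b j k" using Suc.prems by (intro Suc.IH) auto
  ultimately show ?case by simp
qed

lemma PG_le1: "(\<forall>i. a i \<le> 1) \<Longrightarrow> PG a j k \<le> 1"
proof (induction j arbitrary: k)
  case 0 then show ?case by simp
next
  case (Suc j)
  show ?case using Suc.IH[OF Suc.prems, of k] Suc.IH[OF Suc.prems, of "Suc k"]
    by (simp add: absdiff_def) arith
qed

lemma absdiff_cancel: "w \<le> 1 \<Longrightarrow> (u::nat) \<le> 1 \<Longrightarrow> absdiff (absdiff w u) u = w"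
  by (auto simp: absdiff_def)

lemma PG_sym:
  assumes "\<forall>i. a i \<le> 1"
  shows "PG (Ups a) j k = PG a k j"
proof (induction j arbitrary: k)
  case 0 then show ?case by (simp add: Ups_def)
next
  case (Suc j)
  have "PG (Ups a) (Suc j) k = absdiff (PG a (Suc k) j) (PG a k j)"
    using Suc.IH by simp
  also have "\<dots> = absdiff (absdiff (PG a k (Suc j)) (PG a k j)) (PG a k j)" by simp
  also have "\<dots> = PG a k (Suc j)"
    using PG_le1[OF assms] by (intro absdiff_cancel) auto
  finally show ?case .
qed

lemma funpow_inv:
  assumes "f (f x) = x"
  shows "(f ^^ (2 * m)) x = x"
proof -
  have "((f ^^ 2) ^^ m) x = x"
    by (induction m) (simp_all add: assms numeral_2_eq_2)
  then show ?thesis by (simp add: funpow_mult)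
qed

definition ext :: "nat list \<Rightarrow> nat \<Rightarrow> nat" where
  "ext xs k = (if k < length xs then xs ! k else 0)"

lemma ext_le1: "set xs \<subseteq> {0,1} \<Longrightarrow> \<forall>i. ext xs i \<le> 1"
  by (auto simp: ext_def dest!: nth_mem)

lemma PG_list_ext: "j + k < length xs \<Longrightarrow> PG (\<lambda>i. xs ! i) j k = PG (ext xs) j k"
  by (rule PG_local) (auto simp: ext_def)

lemma Ups_list_nth: "i < length xs \<Longrightarrow> Ups_list xs ! i = Ups (ext xs) i"
  unfolding Ups_list_def Ups_def using PG_list_ext[of i 0 xs] by simp

lemma Ups_list_len: "length (Ups_list xs) = length xs"
  by (simp add: Ups_list_def)

lemma list_sym:
  assumes "set xs \<subseteq> {0,1}" "j + k < length xs"
  shows "PG (\<lambda>i. Ups_list xs ! i) j k = PG (\<lambda>i. xs ! i) k j"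
proof -
  have "PG (\<lambda>i. Ups_list xs ! i) j k = PG (Ups (ext xs)) j k"
    using assms(2) by (intro PG_local) (auto simp: Ups_list_nth Ups_list_len)
  also have "\<dots> = PG (ext xs) k j" using PG_sym ext_le1[OF assms(1)] by blast
  also have "\<dots> = PG (\<lambda>i. xs ! i) k j" using PG_list_ext[of k j xs] assms(2) by simp
  finally show ?thesis .
qed

lemma list_inv:
  assumes "set xs \<subseteq> {0,1}"
  shows "Ups_list (Ups_list xs) = xs"
proof (rule nth_equalityI)
  show "length (Ups_list (Ups_list xs)) = length xs" by (simp add: Ups_list_len)
  fix i assume "i < length (Ups_list (Ups_list xs))"
  then have i: "i < length xs" by (simp add: Ups_list_len)
  have "Ups_list (Ups_list xs) ! i = PG (\<lambda>k. Ups_list xs ! k) i 0"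
    using i by (simp add: Ups_list_def Ups_list_len)
  also have "\<dots> = PG (\<lambda>k. xs ! k) 0 i" using list_sym[OF assms, of i 0] i by simp
  finally show "Ups_list (Ups_list xs) ! i = xs ! i" by simp
qed

theorem theorem2p4:
  shows "(\<forall>a :: nat \<Rightarrow> nat. (\<forall>k. a k \<in> {0, 1}) \<longrightarrow>
            Ups (Ups a) = a
          \<and> (Ups ^^ 6) a = a
          \<and> (\<forall>n. (Ups ^^ (6 * n)) a = a)
          \<and> (\<forall>j k. PG (Ups a) j k = PG a k j))
       \<and> (\<forall>xs :: nat list. length xs \<ge> 1 \<and> set xs \<subseteq> {0, 1} \<longrightarrow>
            Ups_list (Ups_list xs) = xs
          \<and> (Ups_list ^^ 6) xs = xs
          \<and> (\<forall>n. (Ups_list ^^ (6 * n)) xs = xs)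
          \<and> (\<forall>j k. j + k < length xs \<longrightarrow>
                 PG (\<lambda>i. Ups_list xs ! i) j k = PG (\<lambda>i. xs ! i) k j))"
proof (intro conjI allI impI)
  fix a :: "nat \<Rightarrow> nat" assume h: "\<forall>k. a k \<in> {0, 1}"
  have le: "\<forall>i. a i \<le> 1"
  proof
    fix i from h have "a i = 0 \<or> a i = 1" by auto
    then show "a i \<le> 1" by auto
  qed
  show sym: "\<And>j k. PG (Ups a) j k = PG a k j" using PG_sym[OF le] by blast
  show inv: "Ups (Ups a) = a"
  proof
    fix x show "Ups (Ups a) x = a x" using sym[of x 0] by (simp add: Ups_def)
  qed
  show n: "\<And>n. (Ups ^^ (6 * n)) a = a"
  proof -
    fix n
    have "(Ups ^^ (2 * (3 * n))) a = a" by (rule funpow_inv[where f=Ups, OF inv])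
    then show "(Ups ^^ (6 * n)) a = a" by simp
  qed
  show "(Ups ^^ 6) a = a" using n[of 1] by simp
next
  fix xs :: "nat list" assume h: "1 \<le> length xs \<and> set xs \<subseteq> {0, 1}"
  show inv: "Ups_list (Ups_list xs) = xs" using list_inv h by blast
  show "\<And>j k. j + k < length xs \<Longrightarrow> PG (\<lambda>i. Ups_list xs ! i) j k = PG (\<lambda>i. xs ! i) k j"
    using list_sym h by blast
  show n: "\<And>n. (Ups_list ^^ (6 * n)) xs = xs"
  proof -
    fix n
    have "(Ups_list ^^ (2 * (3 * n))) xs = xs" by (rule funpow_inv[where f=Ups_list, OF inv])
    then show "(Ups_list ^^ (6 * n)) xs = xs" by simp
  qed
  show "(Ups_list ^^ 6) xs = xs" using n[of 1] by simp
qed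

end
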